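(* The rational map $\mathbb{P}^2 \dashrightarrow \mathbb{P}^3$, $(r:s:t)\mapsto(w:x:y:z)$ with \begin{align*} w &= t^3-2t^2s-2tsr+ts^2+r^2s-r^3-rs^2,\\ x &= -t^3-2t^2s+ts^2-2tsr+2rs^2-s^3+r^3-2r^2s,\\ y &= 2t^3+3t^2r-2t^2s-2tsr+3tr^2+ts^2+2rs^2-s^3+r^3-2r^2s,\\ z &= -2t^3+t^2s-3t^2r-3tr^2+4tsr-2ts^2-r^3+r^2s-rs^2, \end{align*} defined over $\mathbb{Q}$, is a birational map from $\mathbb{P}^2$ onto the cubic surface $S_1: w^3 + x^3 = y^3 + z^3$. For this parametrization, $w^3+x^3$ factors over $\mathbb{Q}$ as a product of one linear, two quadratic and one quartic polynomial in $r,s,t$.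
   Context: No additional context. *)

theory Defs
  imports "HOL-Computational_Algebra.Polynomial_Factorial"
begin

text \<open>Polynomials in several variables over Q are represented as iterated univariate
polynomials.  Q[r,s,t] is rat poly poly poly, where r is the innermost variable and
t the outermost; Q[w,x,y,z] is rat poly poly poly poly, w innermost, z outermost.\<close>

type_synonym qpoly3 = "rat poly poly poly"
type_synonym qpoly4 = "rat poly poly poly poly"

definition coeff3 :: "'c::zero poly poly poly \<Rightarrow> nat \<Rightarrow> nat \<Rightarrow> nat \<Rightarrow> 'c" where
  "coeff3 p i j k = coeff (coeff (coeff p k) j) i"

definition coeff4 :: "'c::zero poly poly poly poly \<Rightarrow> nat \<Rightarrow> nat \<Rightarrow> nat \<Rightarrow> nat \<Rightarrow> 'c" where
  "coeff4 p i j k l = coeff (coeff (coeff (coeff p l) k) j) i"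

text \<open>Homogeneous of total degree d (the zero polynomial is homogeneous of every degree).\<close>
definition homog3 :: "'c::zero poly poly poly \<Rightarrow> nat \<Rightarrow> bool" where
  "homog3 p d \<longleftrightarrow> (\<forall>i j k. coeff3 p i j k \<noteq> 0 \<longrightarrow> i + j + k = d)"

definition homog4 :: "'c::zero poly poly poly poly \<Rightarrow> nat \<Rightarrow> bool" where
  "homog4 p d \<longleftrightarrow> (\<forall>i j k l. coeff4 p i j k l \<noteq> 0 \<longrightarrow> i + j + k + l = d)"

definition ev3 :: "('c::zero \<Rightarrow> 'a::comm_semiring_1) \<Rightarrow> 'c poly poly poly \<Rightarrow> 'a \<Rightarrow> 'a \<Rightarrow> 'a \<Rightarrow> 'a" where
  "ev3 \<phi> p r s t =
     poly (map_poly (\<lambda>q. poly (map_poly (\<lambda>u. poly (map_poly \<phi> u) r) q) s) p) t"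

definition ev4 :: "('c::zero \<Rightarrow> 'a::comm_semiring_1) \<Rightarrow> 'c poly poly poly poly
                    \<Rightarrow> 'a \<Rightarrow> 'a \<Rightarrow> 'a \<Rightarrow> 'a \<Rightarrow> 'a" where
  "ev4 \<phi> p w x y z =
     poly (map_poly (\<lambda>q. poly (map_poly (\<lambda>u. poly (map_poly (\<lambda>v. poly (map_poly \<phi> v) w) u) x) q) y) p) z"

definition c3 :: "rat \<Rightarrow> qpoly3" where "c3 a = [:[:[:a:]:]:]"
definition c4 :: "rat \<Rightarrow> qpoly4" where "c4 a = [:[:[:[:a:]:]:]:]"

definition R :: qpoly3 where "R = [:[:[:0, 1:]:]:]"
definition S :: qpoly3 where "S = [:[:0, 1:]:]"
definition T :: qpoly3 where "T = [:0, 1:]"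

definition Wv :: qpoly4 where "Wv = [:[:[:[:0, 1:]:]:]:]"
definition Xv :: qpoly4 where "Xv = [:[:[:0, 1:]:]:]"
definition Yv :: qpoly4 where "Yv = [:[:0, 1:]:]"
definition Zv :: qpoly4 where "Zv = [:0, 1:]"

text \<open>A rational map P^2 --> P^3 over Q given by forms F0..F3 (homogeneous of a common
degree, not all zero) is birational onto the hypersurface V(Phi) in P^3 if its image lies
in V(Phi) and it has a rational inverse V(Phi) --> P^2, i.e. forms G0,G1,G2 of a common
degree, not all vanishing on V(Phi), with G o F = id on P^2 and F o G = id on V(Phi)
(as rational maps, i.e. up to a common nonzero scalar factor, and on V(Phi) modulo
the ideal (Phi)).\<close>
definition birational_onto_hypersurface ::
  "qpoly3 \<Rightarrow> qpoly3 \<Rightarrow> qpoly3 \<Rightarrow> qpoly3 \<Rightarrow> qpoly4 \<Rightarrow> bool" where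
  "birational_onto_hypersurface F0 F1 F2 F3 \<Phi> \<longleftrightarrow>
     (\<exists>d. homog3 F0 d \<and> homog3 F1 d \<and> homog3 F2 d \<and> homog3 F3 d) \<and>
     (F0 \<noteq> 0 \<or> F1 \<noteq> 0 \<or> F2 \<noteq> 0 \<or> F3 \<noteq> 0) \<and>
     ev4 c3 \<Phi> F0 F1 F2 F3 = 0 \<and>
     (\<exists>G0 G1 G2 :: qpoly4.
        (\<exists>e. homog4 G0 e \<and> homog4 G1 e \<and> homog4 G2 e) \<and>
        \<not> (\<Phi> dvd G0 \<and> \<Phi> dvd G1 \<and> \<Phi> dvd G2) \<and>
        (\<exists>h::qpoly3. h \<noteq> 0 \<and>
            ev4 c3 G0 F0 F1 F2 F3 = h * R \<and>
            ev4 c3 G1 F0 F1 F2 F3 = h * S \<and>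
            ev4 c3 G2 F0 F1 F2 F3 = h * T) \<and>
        (\<exists>k::qpoly4. \<not> \<Phi> dvd k \<and>
            \<Phi> dvd (ev3 c4 F0 G0 G1 G2 - k * Wv) \<and>
            \<Phi> dvd (ev3 c4 F1 G0 G1 G2 - k * Xv) \<and>
            \<Phi> dvd (ev3 c4 F2 G0 G1 G2 - k * Yv) \<and>
            \<Phi> dvd (ev3 c4 F3 G0 G1 G2 - k * Zv)))"

definition pw :: qpoly3 where
  "pw = T^3 - 2*T^2*S - 2*T*S*R + T*S^2 + R^2*S - R^3 - R*S^2"
definition px :: qpoly3 where
  "px = - (T^3) - 2*T^2*S + T*S^2 - 2*T*S*R + 2*R*S^2 - S^3 + R^3 - 2*R^2*S"
definition py :: qpoly3 where
  "py = 2*T^3 + 3*T^2*R - 2*T^2*S - 2*T*S*R + 3*T*R^2 + T*S^2 + 2*R*S^2 - S^3 + R^3 - 2*R^2*S"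
definition pz :: qpoly3 where
  "pz = - (2*T^3) + T^2*S - 3*T^2*R - 3*T*R^2 + 4*T*S*R - 2*T*S^2 - R^3 + R^2*S - R*S^2"

definition S1 :: qpoly4 where
  "S1 = Wv^3 + Xv^3 - Yv^3 - Zv^3"

end

theory Submission
  imports Defs
begin

section \<open>Ring homomorphisms and evaluation\<close>

definition rhom :: "('a::comm_ring_1 \<Rightarrow> 'b::comm_ring_1) \<Rightarrow> bool" where
  "rhom f \<longleftrightarrow> f 0 = 0 \<and> f 1 = 1 \<and> (\<forall>x y. f (x + y) = f x + f y) \<and> (\<forall>x y. f (x * y) = f x * f y)"

lemma rhom_0: "rhom f \<Longrightarrow> f 0 = 0" by (simp add: rhom_def)
lemma rhom_1: "rhom f \<Longrightarrow> f 1 = 1" by (simp add: rhom_def)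
lemma rhom_add: "rhom f \<Longrightarrow> f (x + y) = f x + f y" by (simp add: rhom_def)
lemma rhom_mult: "rhom f \<Longrightarrow> f (x * y) = f x * f y" by (simp add: rhom_def)
lemma rhom_uminus: "rhom f \<Longrightarrow> f (- x) = - f x"
proof -
  assume h: "rhom f"
  have "f x + f (- x) = f (x + - x)" using h by (simp only: rhom_add)
  also have "\<dots> = 0" using h by (simp add: rhom_0)
  finally show ?thesis by (simp add: add_eq_0_iff)
qed
lemma rhom_diff: "rhom f \<Longrightarrow> f (x - y) = f x - f y"
  using rhom_add[of f x "- y"] rhom_uminus[of f y] by simp
lemma rhom_power: "rhom f \<Longrightarrow> f (x ^ n) = f x ^ n"
  by (induction n) (simp_all add: rhom_1 rhom_mult)
lemma rhom_of_nat: "rhom f \<Longrightarrow> f (of_nat n) = of_nat n"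
  by (induction n) (simp_all add: rhom_0 rhom_1 rhom_add)
lemma rhom_numeral: "rhom f \<Longrightarrow> f (numeral n) = numeral n"
  using rhom_of_nat[of f "numeral n"] by simp

lemma map_poly_add_hom:
  assumes "rhom f" shows "map_poly f (p + q) = map_poly f p + map_poly f q"
  by (intro poly_eqI) (simp add: coeff_map_poly assms rhom_0 rhom_add)

lemma map_poly_mult_hom:
  assumes f: "rhom f" shows "map_poly f (p * q) = map_poly f p * map_poly f q"
proof (induction p rule: pCons_induct)
  case 0
  then show ?case by simp
next
  case (pCons a p)
  have "map_poly f (pCons a p * q) = map_poly f (smult a q + pCons 0 (p * q))"
    by simp
  also have "\<dots> = smult (f a) (map_poly f q) + pCons 0 (map_poly f p * map_poly f q)"
    using f pCons.IH
    by (simp add: map_poly_add_hom map_poly_smult map_poly_pCons rhom_0 rhom_mult)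
  also have "\<dots> = map_poly f (pCons a p) * map_poly f q"
    using f by (simp add: map_poly_pCons rhom_0)
  finally show ?case .
qed

lemma rhom_map_poly: "rhom f \<Longrightarrow> rhom (map_poly f)"
  unfolding rhom_def[of "map_poly f"]
  by (simp add: map_poly_add_hom map_poly_mult_hom rhom_1 rhom_0)

lemma rhom_poly_eval: "rhom f \<Longrightarrow> rhom (\<lambda>p. poly (map_poly f p) a)"
  unfolding rhom_def[of "\<lambda>p. poly (map_poly f p) a"]
  by (simp add: map_poly_add_hom map_poly_mult_hom rhom_1 rhom_0)

lemma rhom_id: "rhom (\<lambda>x. x)" by (simp add: rhom_def)

lemma rhom_c3: "rhom c3" by (simp add: rhom_def c3_def one_pCons)
lemma rhom_c4: "rhom c4" by (simp add: rhom_def c4_def one_pCons)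

lemma rhom_ev3: "rhom \<phi> \<Longrightarrow> rhom (\<lambda>p. ev3 \<phi> p r s t)"
  unfolding ev3_def by (intro rhom_poly_eval)

lemma rhom_ev4: "rhom \<phi> \<Longrightarrow> rhom (\<lambda>p. ev4 \<phi> p w x y z)"
  unfolding ev4_def by (intro rhom_poly_eval)

lemma ev3_add: "rhom \<phi> \<Longrightarrow> ev3 \<phi> (p + q) r s t = ev3 \<phi> p r s t + ev3 \<phi> q r s t"
  using rhom_add[OF rhom_ev3] by blast
lemma ev3_mult: "rhom \<phi> \<Longrightarrow> ev3 \<phi> (p * q) r s t = ev3 \<phi> p r s t * ev3 \<phi> q r s t"
  using rhom_mult[OF rhom_ev3] by blast
lemma ev3_diff: "rhom \<phi> \<Longrightarrow> ev3 \<phi> (p - q) r s t = ev3 \<phi> p r s t - ev3 \<phi> q r s t"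
  using rhom_diff[OF rhom_ev3] by blast
lemma ev3_uminus: "rhom \<phi> \<Longrightarrow> ev3 \<phi> (- p) r s t = - ev3 \<phi> p r s t"
  using rhom_uminus[OF rhom_ev3] by blast
lemma ev3_power: "rhom \<phi> \<Longrightarrow> ev3 \<phi> (p ^ n) r s t = ev3 \<phi> p r s t ^ n"
  using rhom_power[OF rhom_ev3] by blast
lemma ev3_numeral: "rhom \<phi> \<Longrightarrow> ev3 \<phi> (numeral n) r s t = numeral n"
  using rhom_numeral[OF rhom_ev3] by blast

lemma ev4_add: "rhom \<phi> \<Longrightarrow> ev4 \<phi> (p + q) w x y z = ev4 \<phi> p w x y z + ev4 \<phi> q w x y z"
  using rhom_add[OF rhom_ev4] by blast
lemma ev4_mult: "rhom \<phi> \<Longrightarrow> ev4 \<phi> (p * q) w x y z = ev4 \<phi> p w x y z * ev4 \<phi> q w x y z"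
  using rhom_mult[OF rhom_ev4] by blast
lemma ev4_diff: "rhom \<phi> \<Longrightarrow> ev4 \<phi> (p - q) w x y z = ev4 \<phi> p w x y z - ev4 \<phi> q w x y z"
  using rhom_diff[OF rhom_ev4] by blast
lemma ev4_uminus: "rhom \<phi> \<Longrightarrow> ev4 \<phi> (- p) w x y z = - ev4 \<phi> p w x y z"
  using rhom_uminus[OF rhom_ev4] by blast
lemma ev4_power: "rhom \<phi> \<Longrightarrow> ev4 \<phi> (p ^ n) w x y z = ev4 \<phi> p w x y z ^ n"
  using rhom_power[OF rhom_ev4] by blast
lemma ev4_numeral: "rhom \<phi> \<Longrightarrow> ev4 \<phi> (numeral n) w x y z = numeral n"
  using rhom_numeral[OF rhom_ev4] by blast

lemma ev3_R: "rhom \<phi> \<Longrightarrow> ev3 \<phi> R r s t = r"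
  by (simp add: ev3_def R_def map_poly_pCons rhom_0 rhom_1)
lemma ev3_S: "rhom \<phi> \<Longrightarrow> ev3 \<phi> S r s t = s"
  by (simp add: ev3_def S_def map_poly_pCons rhom_0 rhom_1)
lemma ev3_T: "rhom \<phi> \<Longrightarrow> ev3 \<phi> T r s t = t"
  by (simp add: ev3_def T_def map_poly_pCons rhom_0 rhom_1)

lemma ev4_W: "rhom \<phi> \<Longrightarrow> ev4 \<phi> Wv w x y z = w"
  by (simp add: ev4_def Wv_def map_poly_pCons rhom_0 rhom_1)
lemma ev4_X: "rhom \<phi> \<Longrightarrow> ev4 \<phi> Xv w x y z = x"
  by (simp add: ev4_def Xv_def map_poly_pCons rhom_0 rhom_1)
lemma ev4_Y: "rhom \<phi> \<Longrightarrow> ev4 \<phi> Yv w x y z = y"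
  by (simp add: ev4_def Yv_def map_poly_pCons rhom_0 rhom_1)
lemma ev4_Z: "rhom \<phi> \<Longrightarrow> ev4 \<phi> Zv w x y z = z"
  by (simp add: ev4_def Zv_def map_poly_pCons rhom_0 rhom_1)

lemmas ev3_simps = ev3_add ev3_mult ev3_diff ev3_uminus ev3_power ev3_numeral ev3_R ev3_S ev3_T
lemmas ev4_simps = ev4_add ev4_mult ev4_diff ev4_uminus ev4_power ev4_numeral ev4_W ev4_X ev4_Y ev4_Z


section \<open>Homogeneity\<close>

definition Hp :: "('a::zero \<Rightarrow> nat \<Rightarrow> bool) \<Rightarrow> 'a poly \<Rightarrow> nat \<Rightarrow> bool" where
  "Hp H p d \<longleftrightarrow> (\<forall>k. coeff p k \<noteq> 0 \<longrightarrow> k \<le> d \<and> H (coeff p k) (d - k))"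

definition H0 :: "rat \<Rightarrow> nat \<Rightarrow> bool" where
  "H0 c d \<longleftrightarrow> (c \<noteq> 0 \<longrightarrow> d = 0)"

definition graded :: "('a::comm_ring_1 \<Rightarrow> nat \<Rightarrow> bool) \<Rightarrow> bool" where
  "graded H \<longleftrightarrow> (\<forall>d. H 0 d) \<and> H 1 0 \<and> (\<forall>a b d. H a d \<longrightarrow> H b d \<longrightarrow> H (a + b) d) \<and>
     (\<forall>a b d e. H a d \<longrightarrow> H b e \<longrightarrow> H (a * b) (d + e)) \<and> (\<forall>a d. H a d \<longrightarrow> H (- a) d)"

lemma graded_H0: "graded H0"
  by (auto simp: graded_def H0_def)

lemma graded_sum:
  assumes g: "graded H" and h: "\<And>i. i \<in> A \<Longrightarrow> H (f i) d"
  shows "H (sum f A) d"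
proof (cases "finite A")
  case True
  then show ?thesis using h
  proof (induction A rule: finite_induct)
    case empty
    then show ?case using g by (simp add: graded_def)
  next
    case (insert x F)
    then show ?case using g by (simp add: graded_def)
  qed
next
  case False
  then show ?thesis using g by (simp add: graded_def)
qed

lemma Hp_coeff:
  assumes g: "graded H" and h: "Hp H p d" and k: "k \<le> d"
  shows "H (coeff p k) (d - k)"
  using g h k by (cases "coeff p k = 0") (auto simp: graded_def Hp_def)

lemma Hp_coeff_big:
  assumes h: "Hp H p d" and k: "d < k"
  shows "coeff p k = 0"
  using h k by (auto simp: Hp_def)

lemma graded_Hp:
  assumes g: "graded H" shows "graded (Hp H)"
proof -
  have z: "H 0 d" for d using g by (simp add: graded_def)
  have one: "H 1 0" using g by (simp add: graded_def)
  have ad: "H a d \<Longrightarrow> H b d \<Longrightarrow> H (a + b) d" for a b d using g by (simp add: graded_def)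
  have mu: "H a d \<Longrightarrow> H b e \<Longrightarrow> H (a * b) (d + e)" for a b d e using g by (simp add: graded_def)
  have um: "H a d \<Longrightarrow> H (- a) d" for a d using g by (simp add: graded_def)
  have A: "Hp H (p + q) d" if "Hp H p d" "Hp H q d" for p q d
    unfolding Hp_def
  proof (intro allI impI)
    fix k assume nz: "coeff (p + q) k \<noteq> 0"
    have kd: "k \<le> d"
    proof (rule ccontr)
      assume "\<not> k \<le> d"
      then have "coeff p k = 0" "coeff q k = 0" using that Hp_coeff_big by (metis not_le)+
      then show False using nz by simp
    qed
    moreover have "H (coeff (p + q) k) (d - k)"
      using Hp_coeff[OF g that(1) kd] Hp_coeff[OF g that(2) kd] ad by simp
    ultimately show "k \<le> d \<and> H (coeff (p + q) k) (d - k)" by simp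
  qed
  have U: "Hp H (- p) d" if "Hp H p d" for p d
    using that um by (auto simp: Hp_def)
  have M: "Hp H (p * q) (d + e)" if hp: "Hp H p d" and hq: "Hp H q e" for p q d e
    unfolding Hp_def
  proof (intro allI impI)
    fix n assume nz: "coeff (p * q) n \<noteq> 0"
    have cm: "coeff (p * q) n = (\<Sum>i\<le>n. coeff p i * coeff q (n - i))"
      by (simp add: coeff_mult)
    from nz cm obtain i where i: "i \<le> n" "coeff p i * coeff q (n - i) \<noteq> 0"
      by (metis (no_types, lifting) atMost_iff sum.neutral)
    then have "coeff p i \<noteq> 0" "coeff q (n - i) \<noteq> 0" by auto
    then have "i \<le> d" "n - i \<le> e" using hp hq by (auto simp: Hp_def)
    then have nde: "n \<le> d + e" using i by linarith
    have "H (coeff p i * coeff q (n - i)) (d + e - n)" if "i \<le> n" for i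
    proof (cases "coeff p i = 0 \<or> coeff q (n - i) = 0")
      case True
      then show ?thesis using z by auto
    next
      case False
      then have "i \<le> d" "n - i \<le> e" using hp hq by (auto simp: Hp_def)
      moreover have "H (coeff p i) (d - i)" "H (coeff q (n - i)) (e - (n - i))"
        using False hp hq by (auto simp: Hp_def)
      ultimately show ?thesis using mu[of "coeff p i" "d - i" "coeff q (n - i)" "e - (n - i)"] that
        by (simp add: algebra_simps)
    qed
    then have "H (coeff (p * q) n) (d + e - n)"
      unfolding cm by (intro graded_sum[OF g]) auto
    then show "n \<le> d + e \<and> H (coeff (p * q) n) (d + e - n)" using nde by simp
  qed
  have Z: "Hp H 0 d" for d by (simp add: Hp_def)
  have O: "Hp H 1 0" using one by (simp add: Hp_def coeff_1)
  show ?thesis unfolding graded_def using A U M Z O by blast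
qed

lemma Hp_add: "graded H \<Longrightarrow> Hp H p d \<Longrightarrow> Hp H q d \<Longrightarrow> Hp H (p + q) d"
  using graded_Hp[of H] by (simp add: graded_def)
lemma Hp_uminus: "graded H \<Longrightarrow> Hp H p d \<Longrightarrow> Hp H (- p) d"
  using graded_Hp[of H] by (simp add: graded_def)
lemma Hp_diff: "graded H \<Longrightarrow> Hp H p d \<Longrightarrow> Hp H q d \<Longrightarrow> Hp H (p - q) d"
  using Hp_add[of H p d "- q"] Hp_uminus[of H q d] by simp
lemma Hp_mult: "graded H \<Longrightarrow> Hp H p d \<Longrightarrow> Hp H q e \<Longrightarrow> d + e = n \<Longrightarrow> Hp H (p * q) n"
  using graded_Hp[of H] unfolding graded_def by blast
lemma Hp_one: "graded H \<Longrightarrow> Hp H 1 0"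
  using graded_Hp[of H] by (simp add: graded_def)
lemma Hp_power: "graded H \<Longrightarrow> Hp H p d \<Longrightarrow> n * d = m \<Longrightarrow> Hp H (p ^ n) m"
proof (induction n arbitrary: m)
  case 0
  then show ?case using Hp_one by simp
next
  case (Suc n)
  then show ?case using Hp_mult[of H p d "p ^ n" "n * d" m] by simp
qed
lemma Hp_of_nat: "graded H \<Longrightarrow> Hp H (of_nat n) 0"
proof (induction n)
  case 0
  then show ?case by (simp add: Hp_def)
next
  case (Suc n)
  then show ?case using Hp_add[OF Suc.prems Hp_one[OF Suc.prems] Suc.IH[OF Suc.prems]] by simp
qed
lemma Hp_numeral: "graded H \<Longrightarrow> Hp H (numeral n) 0"
  using Hp_of_nat[of H "numeral n"] by simp
lemma Hp_const: "H c d \<Longrightarrow> Hp H [:c:] d"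
  by (auto simp: Hp_def coeff_pCons split: nat.splits)
lemma Hp_X: "graded H \<Longrightarrow> Hp H [:0, 1:] 1"
  by (auto simp: Hp_def coeff_pCons graded_def split: nat.splits)

abbreviation "H1 \<equiv> Hp H0"
abbreviation "H2 \<equiv> Hp H1"
abbreviation "H3 \<equiv> Hp H2"
abbreviation "H4 \<equiv> Hp H3"

lemma graded_H1: "graded H1" by (intro graded_Hp graded_H0)
lemma graded_H2: "graded H2" by (intro graded_Hp graded_H1)
lemma graded_H3: "graded H3" by (intro graded_Hp graded_H2)

lemma H3_R: "H3 R 1"
  unfolding R_def by (intro Hp_const Hp_X graded_H0)
lemma H3_S: "H3 S 1"
  unfolding S_def by (intro Hp_const Hp_X graded_H1)
lemma H3_T: "H3 T 1"
  unfolding T_def by (intro Hp_X graded_H2)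
lemma H4_W: "H4 Wv 1"
  unfolding Wv_def by (intro Hp_const Hp_X graded_H0)
lemma H4_X: "H4 Xv 1"
  unfolding Xv_def by (intro Hp_const Hp_X graded_H1)
lemma H4_Y: "H4 Yv 1"
  unfolding Yv_def by (intro Hp_const Hp_X graded_H2)
lemma H4_Z: "H4 Zv 1"
  unfolding Zv_def by (intro Hp_X graded_H3)

lemma H3_homog3: "H3 p d \<Longrightarrow> homog3 p d"
  unfolding homog3_def coeff3_def
proof (intro allI impI)
  fix i j k
  assume h: "H3 p d" and nz: "coeff (coeff (coeff p k) j) i \<noteq> 0"
  then have "coeff p k \<noteq> 0" by auto
  with h have k: "k \<le> d" "H2 (coeff p k) (d - k)" by (auto simp: Hp_def)
  from nz have "coeff (coeff p k) j \<noteq> 0" by auto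
  with k have j: "j \<le> d - k" "H1 (coeff (coeff p k) j) (d - k - j)" by (auto simp: Hp_def)
  with nz have i: "i \<le> d - k - j" "H0 (coeff (coeff (coeff p k) j) i) (d - k - j - i)"
    by (auto simp: Hp_def)
  with nz have "d - k - j - i = 0" by (simp add: H0_def)
  with i j k show "i + j + k = d" by linarith
qed

lemma H4_homog4: "H4 p d \<Longrightarrow> homog4 p d"
  unfolding homog4_def coeff4_def
proof (intro allI impI)
  fix i j k l
  assume h: "H4 p d" and nz: "coeff (coeff (coeff (coeff p l) k) j) i \<noteq> 0"
  then have "coeff p l \<noteq> 0" by auto
  with h have l: "l \<le> d" "H3 (coeff p l) (d - l)" by (auto simp: Hp_def)
  from nz have "coeff (coeff p l) k \<noteq> 0" by auto
  with l have k: "k \<le> d - l" "H2 (coeff (coeff p l) k) (d - l - k)" by (auto simp: Hp_def)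
  from nz have "coeff (coeff (coeff p l) k) j \<noteq> 0" by auto
  with k have j: "j \<le> d - l - k" "H1 (coeff (coeff (coeff p l) k) j) (d - l - k - j)"
    by (auto simp: Hp_def)
  with nz have i: "i \<le> d - l - k - j" "H0 (coeff (coeff (coeff (coeff p l) k) j) i) (d - l - k - j - i)"
    by (auto simp: Hp_def)
  with nz have "d - l - k - j - i = 0" by (simp add: H0_def)
  with i j k l show "i + j + k + l = d" by linarith
qed

lemmas H3_intros = Hp_add[OF graded_H2] Hp_diff[OF graded_H2] Hp_uminus[OF graded_H2]
  Hp_mult[OF graded_H2] Hp_power[OF graded_H2] Hp_numeral[OF graded_H2] H3_R H3_S H3_T
lemmas H4_intros = Hp_add[OF graded_H3] Hp_diff[OF graded_H3] Hp_uminus[OF graded_H3]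
  Hp_mult[OF graded_H3] Hp_power[OF graded_H3] Hp_numeral[OF graded_H3] H4_W H4_X H4_Y H4_Z


definition fq1 :: qpoly3 where "fq1 = 4*T^2 - 2*T*S + 4*T*R + S^2 - S*R + R^2"

lemma fq1_nested: "fq1 = [:[:[:0, 0, 1:], [:0, - 1:], [:1:]:], [:[:0, 4:], [:- 2:]:], [:[:4:]:]:]"
  by (simp add: fq1_def R_def S_def T_def power2_eq_square power3_eq_cube power4_eq_xxxx numeral_poly algebra_simps one_pCons)

definition fq2 :: qpoly3 where "fq2 = T^2 + T*S - 2*T*R + S^2 - S*R + R^2"

lemma fq2_nested: "fq2 = [:[:[:0, 0, 1:], [:0, - 1:], [:1:]:], [:[:0, - 2:], [:1:]:], [:[:1:]:]:]"
  by (simp add: fq2_def R_def S_def T_def power2_eq_square power3_eq_cube power4_eq_xxxx numeral_poly algebra_simps one_pCons)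

definition ff :: qpoly3 where "ff = 3*T^4 - 3*T^3*S + 6*T^3*R + 4*T^2*S^2 - 9*T^2*S*R + 9*T^2*R^2 - 2*T*S^3 + 7*T*S^2*R - 9*T*S*R^2 + 6*T*R^3 + S^4 - 4*S^3*R + 7*S^2*R^2 - 6*S*R^3 + 3*R^4"

lemma ff_nested: "ff = [:[:[:0, 0, 0, 0, 3:], [:0, 0, 0, - 6:], [:0, 0, 7:], [:0, - 4:], [:1:]:], [:[:0, 0, 0, 6:], [:0, 0, - 9:], [:0, 7:], [:- 2:]:], [:[:0, 0, 9:], [:0, - 9:], [:4:]:], [:[:0, 6:], [:- 3:]:], [:[:3:]:]:]"
  by (simp add: ff_def R_def S_def T_def power2_eq_square power3_eq_cube power4_eq_xxxx numeral_poly algebra_simps one_pCons)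


section \<open>Irreducibility\<close>

lemma rhom_poly: "rhom (\<lambda>u. poly u (a::'a::comm_ring_1))"
  by (simp add: rhom_def)

definition phi :: "rat poly poly \<Rightarrow> rat" where
  "phi c = poly (map_poly (\<lambda>u. poly u 1) c) 2"

lemma rhom_phi: "rhom phi"
  unfolding phi_def by (intro rhom_poly_eval rhom_poly)

lemma irred_crit:
  fixes P :: "rat poly poly poly" and \<phi> :: "rat poly poly \<Rightarrow> rat"
  assumes hom: "rhom \<phi>" and deg: "degree P \<noteq> 0" and lc: "lead_coeff P dvd 1"
    and nf: "\<And>a b. map_poly \<phi> P = a * b \<Longrightarrow> degree a = 0 \<or> degree b = 0"
  shows "irreducible P"
proof (rule irreducibleI)
  show P0: "P \<noteq> 0" using deg by auto
  show "\<not> P dvd 1" using deg by (auto simp: is_unit_poly_iff)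
  fix a b assume Pab: "P = a * b"
  then have a0: "a \<noteq> 0" "b \<noteq> 0" using P0 by auto
  have lab: "lead_coeff a * lead_coeff b = lead_coeff P" using Pab by (simp add: lead_coeff_mult)
  have ua: "lead_coeff a dvd 1" using lab lc by (metis dvd_mult2 dvd_refl dvd_trans)
  have ub: "lead_coeff b dvd 1" using lab lc by (metis dvd_mult dvd_refl dvd_trans)
  have nzu: "\<phi> u \<noteq> 0" if "u dvd 1" for u
  proof -
    from that obtain v where "1 = u * v" by (auto simp: dvd_def)
    then have "1 = \<phi> u * \<phi> v" using hom by (metis rhom_1 rhom_mult)
    then show ?thesis by auto
  qed
  have da: "degree (map_poly \<phi> a) = degree a"
    by (rule map_poly_degree_eq) (use nzu ua in auto)
  have db: "degree (map_poly \<phi> b) = degree b"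
    by (rule map_poly_degree_eq) (use nzu ub in auto)
  have "map_poly \<phi> P = map_poly \<phi> a * map_poly \<phi> b"
    using Pab hom by (simp add: map_poly_mult_hom)
  then have "degree a = 0 \<or> degree b = 0" using nf da db by metis
  then show "a dvd 1 \<or> b dvd 1"
  proof
    assume "degree a = 0"
    then have "a = [:lead_coeff a:]" by (metis degree_0_id)
    then show ?thesis using ua by (metis is_unit_poly_iff)
  next
    assume "degree b = 0"
    then have "b = [:lead_coeff b:]" by (metis degree_0_id)
    then show ?thesis using ub by (metis is_unit_poly_iff)
  qed
qed


lemma poly_deg2_eq:
  fixes p :: "'a::zero poly" assumes "degree p \<le> 2"
  shows "p = [:coeff p 0, coeff p 1, coeff p 2:]"
proof (intro poly_eqI)
  fix n
  show "coeff p n = coeff [:coeff p 0, coeff p 1, coeff p 2:] n"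
  proof (cases "n \<le> 2")
    case True
    then have "n = 0 \<or> n = 1 \<or> n = 2" by auto
    then show ?thesis by (auto simp: coeff_pCons)
  next
    case False
    then have "coeff p n = 0" using assms by (intro coeff_eq_0) auto
    moreover have "n = Suc (Suc (Suc (n - 3)))" using False by arith
    ultimately show ?thesis by (metis coeff_pCons_Suc coeff_pCons_0 coeff_0 pCons_0_0)
  qed
qed

lemma deg1_root:
  fixes a :: "rat poly" assumes "degree a = 1" shows "\<exists>x. poly a x = 0"
proof -
  have "degree a \<le> 2" using assms by simp
  then have ae: "a = [:coeff a 0, coeff a 1, coeff a 2:]" by (rule poly_deg2_eq)
  have c2: "coeff a 2 = 0" using assms by (intro coeff_eq_0) simp
  have "a \<noteq> 0" using assms by auto
  then have "lead_coeff a \<noteq> 0" by simp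
  then have c1: "coeff a 1 \<noteq> 0" using assms by simp
  have pa: "poly a x = coeff a 0 + x * coeff a 1" for x
    by (subst ae) (simp add: c2)
  show ?thesis
    by (rule exI[of _ "- coeff a 0 / coeff a 1"]) (use c1 in \<open>simp add: pa\<close>)
qed
lemma quad_nf:
  fixes g :: "rat poly"
  assumes dg: "degree g = 2" and nr: "\<And>x. poly g x \<noteq> 0" and gab: "g = a * b"
  shows "degree a = 0 \<or> degree b = 0"
proof (rule ccontr)
  assume "\<not> (degree a = 0 \<or> degree b = 0)"
  moreover have "g \<noteq> 0" using dg by auto
  then have "a \<noteq> 0" "b \<noteq> 0" using gab by auto
  then have "degree a + degree b = 2" using dg gab by (simp add: degree_mult_eq)
  ultimately have "degree a = 1" by linarith
  then obtain x where "poly a x = 0" using deg1_root by blast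
  then have "poly g x = 0" using gab by simp
  then show False using nr by blast
qed

lemma odd_sq_mod8:
  fixes a :: int assumes "odd a" shows "a^2 mod 8 = 1"
proof -
  obtain k where k: "a = 2 * k + 1" using assms by (metis oddE)
  have "even (k * (k + 1))" by simp
  then obtain m where m: "k * (k + 1) = 2 * m" by (metis evenE)
  have "a^2 = 8 * m + 1" unfolding k using m by (simp add: power2_eq_square algebra_simps)
  then show ?thesis by simp
qed

lemma rat_sq_ne_13: "(x::rat)^2 \<noteq> 13"
proof
  assume x2: "x^2 = 13"
  obtain a b where q: "quotient_of x = (a, b)" by (cases "quotient_of x")
  have b0: "b > 0" using q quotient_of_denom_pos by blast
  have cp: "coprime a b" using q quotient_of_coprime by blast
  have xe: "x = of_int a / of_int b" using q quotient_of_div by blast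
  have "(of_int a / of_int b :: rat)^2 = 13" using x2 xe by simp
  then have "(of_int a :: rat)^2 = 13 * (of_int b)^2" using b0 by (simp add: field_simps power_divide)
  then have "of_int (a^2) = (of_int (13 * b^2) :: rat)" by simp
  then have ab: "a^2 = 13 * b^2" using of_int_eq_iff by blast
  have "odd a \<or> odd b"
  proof (rule ccontr)
    assume "\<not> (odd a \<or> odd b)"
    then have "even a" "even b" by auto
    then have "is_unit (2::int)" using cp coprime_common_divisor by blast
    then show False by simp
  qed
  moreover have "odd b" if "odd a"
  proof -
    have "odd (a^2)" using that by simp
    then have "odd (13 * b^2)" using ab by simp
    then show ?thesis by simp
  qed
  moreover have "odd a" if "odd b"
  proof -
    have "odd (13 * b^2)" using that by simp
    then have "odd (a^2)" using ab by simp
    then show ?thesis by simp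
  qed
  ultimately have oa: "odd a" and ob: "odd b" by blast+
  have "a^2 mod 8 = 1" using odd_sq_mod8[OF oa] .
  moreover have "(13 * b^2) mod 8 = 5"
  proof -
    have "b^2 mod 8 = 1" using odd_sq_mod8[OF ob] .
    then obtain m where "b^2 = 8 * m + 1" by (metis div_mod_decomp_int add.commute mult.commute)
    then show ?thesis by presburger
  qed
  ultimately show False using ab by simp
qed

lemma no_quad_quad:
  fixes a0 a1 a2 b0 b1 b2 :: rat
  assumes e0: "a0 * b0 = 3" and e1: "a0 * b1 + a1 * b0 = 0" and e2: "a0 * b2 + a1 * b1 + a2 * b0 = 7"
    and e3: "a1 * b2 + a2 * b1 = 0" and e4: "a2 * b2 = 3"
  shows False
proof (cases "a1 = 0")
  case True
  have a00: "a0 \<noteq> 0" using e0 by auto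
  have "b1 = 0" using e1 True a00 by simp
  define u where "u = a0 * b2"
  have s: "u + a2 * b0 = 7" using e2 True u_def by simp
  have p: "u * (a2 * b0) = 9"
  proof -
    have "u * (a2 * b0) = (a0 * b0) * (a2 * b2)" unfolding u_def by (simp add: algebra_simps)
    then show ?thesis using e0 e4 by simp
  qed
  have "u * (7 - u) = 9" using s p by (metis add_diff_cancel_left')
  then have "(2 * u - 7)^2 = 13" by (simp add: power2_eq_square algebra_simps)
  then show False using rat_sq_ne_13 by blast
next
  case False
  have b00: "b0 \<noteq> 0" and a00: "a0 \<noteq> 0" using e0 by auto
  have eqA: "a2 * b0 = a0 * b2"
  proof -
    have "a1 * (a2 * b0) = a1 * (a0 * b2)"
    proof -
      have "a1 * (a2 * b0) = a2 * (a1 * b0)" by (simp add: algebra_simps)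
      also have "\<dots> = - a2 * (a0 * b1)"
      proof -
        have "a1 * b0 = - (a0 * b1)" using e1 by (simp add: eq_neg_iff_add_eq_0 add.commute)
        then show ?thesis by simp
      qed
      also have "\<dots> = - a0 * (a2 * b1)" by (simp add: algebra_simps)
      also have "\<dots> = a0 * (a1 * b2)"
      proof -
        have "a2 * b1 = - (a1 * b2)" using e3 by (simp add: eq_neg_iff_add_eq_0 add.commute)
        then show ?thesis by simp
      qed
      finally show ?thesis by (simp add: algebra_simps)
    qed
    then show ?thesis using False by simp
  qed
  define u where "u = a0 * b2"
  have u2: "u * u = 9"
  proof -
    have "u * u = (a0 * b2) * (a2 * b0)" using eqA u_def by simp
    also have "\<dots> = (a0 * b0) * (a2 * b2)" by (simp add: algebra_simps)
    finally show ?thesis using e0 e4 by simp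
  qed
  have s: "2 * u + a1 * b1 = 7" using e2 eqA u_def by simp
  have neg: "3 * (a1 * b1) = - ((a1 * b0) * (a1 * b0))"
  proof -
    have "3 * (a1 * b1) = (a0 * b0) * (a1 * b1)" using e0 by simp
    also have "\<dots> = (a0 * b1) * (a1 * b0)" by (simp add: algebra_simps)
    also have "a0 * b1 = - (a1 * b0)" using e1 by (simp add: eq_neg_iff_add_eq_0)
    finally show ?thesis by simp
  qed
  have "a1 * b0 \<noteq> 0" using False b00 by simp
  have sq: "\<And>y::rat. y \<noteq> 0 \<Longrightarrow> 0 < y * y"
    by (metis linorder_neqE_linordered_idom mult_neg_neg mult_pos_pos)
  have "(a1 * b0) * (a1 * b0) > 0" using sq[OF \<open>a1 * b0 \<noteq> 0\<close>] .
  then have "a1 * b1 < 0" using neg by linarith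
  then have "u > 7 / 2" using s by linarith
  then have "7 / 2 * (7 / 2) < u * u" using mult_strict_mono[of "7/2" u "7/2" u] by simp
  then show False using u2 by simp
qed


lemma quart_nf:
  fixes a b :: "rat poly"
  assumes gab: "[:3, 0, 7, 0, 3:] = a * b"
  shows "degree a = 0 \<or> degree b = 0"
proof (rule ccontr)
  assume nd: "\<not> (degree a = 0 \<or> degree b = 0)"
  have "a \<noteq> 0" "b \<noteq> 0" using gab by auto
  moreover have "degree ([:3, 0, 7, 0, 3:] :: rat poly) = 4" by simp
  ultimately have "degree a + degree b = 4" using gab by (simp add: degree_mult_eq)
  then have cases: "degree a = 1 \<or> degree b = 1 \<or> (degree a \<le> 2 \<and> degree b \<le> 2)" using nd by arith
  have nr: "poly [:3, 0, 7, 0, 3:] x \<noteq> (0::rat)" for x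
  proof -
    have "poly [:3, 0, 7, 0, 3:] x = 3 + 7 * x^2 + 3 * (x^2)^2"
      by (simp add: power2_eq_square algebra_simps)
    moreover have "x^2 \<ge> 0" by simp
    moreover have "(x^2)^2 \<ge> 0" by simp
    ultimately show ?thesis by linarith
  qed
  from cases show False
  proof (elim disjE)
    assume "degree a = 1"
    then obtain x where "poly a x = 0" using deg1_root by blast
    then show False using nr[of x] gab by (metis mult_zero_left poly_mult)
  next
    assume "degree b = 1"
    then obtain x where "poly b x = 0" using deg1_root by blast
    then show False using nr[of x] gab by (metis mult_zero_right poly_mult)
  next
    assume d: "degree a \<le> 2 \<and> degree b \<le> 2"
    then have "[:3, 0, 7, 0, 3:] = [:coeff a 0, coeff a 1, coeff a 2:] * [:coeff b 0, coeff b 1, coeff b 2:]"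
      using gab poly_deg2_eq by metis
    then have "coeff a 0 * coeff b 0 = 3 \<and> coeff a 0 * coeff b 1 + coeff a 1 * coeff b 0 = 0 \<and>
      coeff a 0 * coeff b 2 + coeff a 1 * coeff b 1 + coeff a 2 * coeff b 0 = 7 \<and>
      coeff a 1 * coeff b 2 + coeff a 2 * coeff b 1 = 0 \<and> coeff a 2 * coeff b 2 = 3"
      by (simp add: algebra_simps)
    then show False using no_quad_quad by blast
  qed
qed

lemma quad_pos:
  fixes c :: rat assumes "c > 0" shows "poly [:3, 0, c:] x \<noteq> 0"
proof -
  have "poly [:3, 0, c:] x = 3 + c * x^2" by (simp add: power2_eq_square algebra_simps)
  moreover have "c * x^2 \<ge> 0" using assms by simp
  ultimately show ?thesis by linarith
qed

lemma unit_cc: "(c::rat) \<noteq> 0 \<Longrightarrow> [:[:c:]:] dvd 1"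
  by (metis is_unit_poly_iff dvd_field_iff)

lemma irr_ff: "irreducible ff"
proof (rule irred_crit[OF rhom_phi])
  show "degree ff \<noteq> 0" by (simp add: ff_nested)
  show "lead_coeff ff dvd 1" by (simp add: ff_nested unit_cc)
  fix a b assume "map_poly phi ff = a * b"
  moreover have "map_poly phi ff = [:3, 0, 7, 0, 3:]"
    by (simp add: ff_nested phi_def map_poly_pCons)
  ultimately show "degree a = 0 \<or> degree b = 0" using quart_nf by metis
qed

lemma irr_fq1: "irreducible fq1"
proof (rule irred_crit[OF rhom_phi])
  show "degree fq1 \<noteq> 0" by (simp add: fq1_nested)
  show "lead_coeff fq1 dvd 1" by (simp add: fq1_nested unit_cc)
  fix a b assume ab: "map_poly phi fq1 = a * b"
  have e: "map_poly phi fq1 = [:3, 0, 4:]"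
    by (simp add: fq1_nested phi_def map_poly_pCons)
  show "degree a = 0 \<or> degree b = 0"
  proof (rule quad_nf[of "[:3, 0, 4:]"])
    show "degree ([:3, 0, 4:] :: rat poly) = 2" by simp
    show "poly ([:3, 0, 4:] :: rat poly) x \<noteq> 0" for x by (rule quad_pos) simp
    show "[:3, 0, 4:] = a * b" using ab e by simp
  qed
qed

lemma irr_fq2: "irreducible fq2"
proof (rule irred_crit[OF rhom_phi])
  show "degree fq2 \<noteq> 0" by (simp add: fq2_nested)
  show "lead_coeff fq2 dvd 1" by (simp add: fq2_nested unit_cc one_pCons)
  fix a b assume ab: "map_poly phi fq2 = a * b"
  have e: "map_poly phi fq2 = [:3, 0, 1:]"
    by (simp add: fq2_nested phi_def map_poly_pCons)
  show "degree a = 0 \<or> degree b = 0"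
  proof (rule quad_nf[of "[:3, 0, 1:]"])
    show "degree ([:3, 0, 1:] :: rat poly) = 2" by simp
    show "poly ([:3, 0, 1:] :: rat poly) x \<noteq> 0" for x by (rule quad_pos) simp
    show "[:3, 0, 1:] = a * b" using ab e by simp
  qed
qed

lemma lin_irred:
  fixes p :: "'a::idom poly"
  assumes d: "degree p = 1" and lc: "lead_coeff p dvd 1"
  shows "irreducible p"
proof (rule irreducibleI)
  show P0: "p \<noteq> 0" using d by auto
  show "\<not> p dvd 1" using d by (auto simp: is_unit_poly_iff)
  fix a b assume pab: "p = a * b"
  then have a0: "a \<noteq> 0" "b \<noteq> 0" using P0 by auto
  have lab: "lead_coeff a * lead_coeff b = lead_coeff p" using pab by (simp add: lead_coeff_mult)
  have ua: "lead_coeff a dvd 1" using lab lc by (metis dvd_mult2 dvd_refl dvd_trans)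
  have ub: "lead_coeff b dvd 1" using lab lc by (metis dvd_mult dvd_refl dvd_trans)
  have "degree a + degree b = 1" using pab a0 d by (simp add: degree_mult_eq)
  then have "degree a = 0 \<or> degree b = 0" by arith
  then show "a dvd 1 \<or> b dvd 1"
  proof
    assume "degree a = 0"
    then have "a = [:lead_coeff a:]" by (metis degree_0_id)
    then show ?thesis using ua by (metis is_unit_poly_iff)
  next
    assume "degree b = 0"
    then have "b = [:lead_coeff b:]" by (metis degree_0_id)
    then show ?thesis using ub by (metis is_unit_poly_iff)
  qed
qed

lemma irr_l: "irreducible (- S)"
proof -
  have "- S = [:[:0, - 1:]:]" by (simp add: S_def)
  moreover have "irreducible ([:0, - 1:] :: rat poly poly)"
    by (rule lin_irred) simp_all
  ultimately show ?thesis by (simp add: irreducible_const_poly_iff)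
qed

definition g0 :: qpoly4 where "g0 = Zv^2 - Zv*Xv + Zv*Wv - Yv*Wv - Xv*Wv + Wv^2"
definition g1 :: qpoly4 where "g1 = Zv^2 + Zv*Wv - Yv^2 - Yv*Xv - Xv^2 + Wv^2"
definition g2 :: qpoly4 where "g2 = - (Zv*Yv) + Xv*Wv"
definition hh :: qpoly3 where "hh = 3*T^5 - 6*T^4*S + 12*T^4*R + 12*T^3*S^2 - 21*T^3*S*R + 21*T^3*R^2 - 12*T^2*S^3 + 36*T^2*S^2*R - 36*T^2*S*R^2 + 24*T^2*R^3 + 6*T*S^4 - 21*T*S^3*R + 36*T*S^2*R^2 - 30*T*S*R^3 + 15*T*R^4 - 3*S^5 + 12*S^4*R - 21*S^3*R^2 + 24*S^2*R^3 - 15*S*R^4 + 6*R^5"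
definition kk :: qpoly4 where "kk = - (Zv^5) + Zv^4*Yv + 2*Zv^4*Xv - 3*Zv^4*Wv - Zv^3*Yv^2 - Zv^3*Yv*Xv + 4*Zv^3*Yv*Wv - Zv^3*Xv^2 + 5*Zv^3*Xv*Wv - 6*Zv^3*Wv^2 + 2*Zv^2*Yv^3 + 3*Zv^2*Yv^2*Xv - 3*Zv^2*Yv^2*Wv + 3*Zv^2*Yv*Xv^2 - 3*Zv^2*Yv*Xv*Wv + 9*Zv^2*Yv*Wv^2 + Zv^2*Xv^3 - 3*Zv^2*Xv^2*Wv + 9*Zv^2*Xv*Wv^2 - 8*Zv^2*Wv^3 - 2*Zv*Yv^4 - 7*Zv*Yv^3*Xv + 3*Zv*Yv^3*Wv - 9*Zv*Yv^2*Xv^2 + 3*Zv*Yv^2*Xv*Wv - 3*Zv*Yv^2*Wv^2 - 7*Zv*Yv*Xv^3 + 3*Zv*Yv*Xv^2*Wv - 3*Zv*Yv*Xv*Wv^2 + 8*Zv*Yv*Wv^3 - 2*Zv*Xv^4 - 3*Zv*Xv^2*Wv^2 + 7*Zv*Xv*Wv^3 - 6*Zv*Wv^4 + 2*Yv^5 + 5*Yv^4*Xv - 5*Yv^4*Wv + 8*Yv^3*Xv^2 - 10*Yv^3*Xv*Wv + 3*Yv^3*Wv^2 + 7*Yv^2*Xv^3 - 9*Yv^2*Xv^2*Wv + 3*Yv^2*Xv*Wv^2 - 2*Yv^2*Wv^3 + 4*Yv*Xv^4 - 4*Yv*Xv^3*Wv + 3*Yv*Xv^2*Wv^2 - 2*Yv*Xv*Wv^3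 + 5*Yv*Wv^4 + Xv^5 + Xv^4*Wv - 2*Xv^2*Wv^3 + 4*Xv*Wv^4 - 3*Wv^5"
definition qq0 :: qpoly4 where "qq0 = Zv^3 - Zv^2*Yv - 2*Zv^2*Xv + 2*Zv^2*Wv + Zv*Yv^2 + Zv*Yv*Xv - 3*Zv*Yv*Wv + Zv*Xv^2 - 3*Zv*Xv*Wv + 3*Zv*Wv^2 + Yv^2*Wv + Yv*Xv*Wv - 3*Yv*Wv^2 + Xv^2*Wv - 3*Xv*Wv^2 + 2*Wv^3"
definition qq1 :: qpoly4 where "qq1 = - (Zv^2*Yv) + Zv*Yv^2 + 2*Zv*Yv*Xv - Zv*Yv*Wv + Zv*Xv*Wv - Yv^3 - Yv^2*Xv + 2*Yv^2*Wv - Yv*Xv^2 - Yv*Wv^2 - 2*Xv^2*Wv + Xv*Wv^2"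
definition qq2 :: qpoly4 where "qq2 = Zv^2*Yv + Zv^2*Xv - Zv*Yv^2 - 3*Zv*Yv*Xv + 2*Zv*Yv*Wv - 2*Zv*Xv^2 + Zv*Xv*Wv + Yv^3 + 2*Yv^2*Xv - 3*Yv^2*Wv + 2*Yv*Xv^2 - 5*Yv*Xv*Wv + 2*Yv*Wv^2 + Xv^3 - Xv^2*Wv + Xv*Wv^2"
definition qq3 :: qpoly4 where "qq3 = - (Yv^2*Wv) - Yv*Xv*Wv + 2*Yv*Wv^2 - Xv^2*Wv + Xv*Wv^2 - Wv^3"

lemma homog_pw: "homog3 pw 3"
  unfolding pw_def by (rule H3_homog3, (rule H3_intros refl | simp)+)
lemma homog_px: "homog3 px 3"
  unfolding px_def by (rule H3_homog3, (rule H3_intros refl | simp)+)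
lemma homog_py: "homog3 py 3"
  unfolding py_def by (rule H3_homog3, (rule H3_intros refl | simp)+)
lemma homog_pz: "homog3 pz 3"
  unfolding pz_def by (rule H3_homog3, (rule H3_intros refl | simp)+)
lemma homog_fq1: "homog3 fq1 2"
  unfolding fq1_def by (rule H3_homog3, (rule H3_intros refl | simp)+)
lemma homog_fq2: "homog3 fq2 2"
  unfolding fq2_def by (rule H3_homog3, (rule H3_intros refl | simp)+)
lemma homog_ff: "homog3 ff 4"
  unfolding ff_def by (rule H3_homog3, (rule H3_intros refl | simp)+)
lemma homog_l: "homog3 (- S) 1"
  by (rule H3_homog3, (rule H3_intros refl | simp)+)
lemma homog_g0: "homog4 g0 2"
  unfolding g0_def by (rule H4_homog4, (rule H4_intros refl | simp)+)
lemma homog_g1: "homog4 g1 2"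
  unfolding g1_def by (rule H4_homog4, (rule H4_intros refl | simp)+)
lemma homog_g2: "homog4 g2 2"
  unfolding g2_def by (rule H4_homog4, (rule H4_intros refl | simp)+)

lemma ev_S1: "ev4 c3 S1 pw px py pz = 0"
proof -
  have "ev4 c3 S1 pw px py pz = pw^3 + px^3 - py^3 - pz^3"
    by (simp only: S1_def ev4_simps[OF rhom_c3])
  also have "\<dots> = 0" unfolding pw_def px_def py_def pz_def by algebra
  finally show ?thesis .
qed

lemma ev_g0: "ev4 c3 g0 pw px py pz = hh * R"
  unfolding g0_def ev4_simps[OF rhom_c3] unfolding pw_def px_def py_def pz_def hh_def by algebra

lemma ev_g1: "ev4 c3 g1 pw px py pz = hh * S"
  unfolding g1_def ev4_simps[OF rhom_c3] unfolding pw_def px_def py_def pz_def hh_def by algebra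

lemma ev_g2: "ev4 c3 g2 pw px py pz = hh * T"
  unfolding g2_def ev4_simps[OF rhom_c3] unfolding pw_def px_def py_def pz_def hh_def by algebra

lemma dvd_pw: "S1 dvd (ev3 c4 pw g0 g1 g2 - kk * Wv)"
proof
  show "ev3 c4 pw g0 g1 g2 - kk * Wv = S1 * qq0"
    unfolding pw_def ev3_simps[OF rhom_c4] unfolding g0_def g1_def g2_def kk_def qq0_def S1_def by algebra
qed

lemma dvd_px: "S1 dvd (ev3 c4 px g0 g1 g2 - kk * Xv)"
proof
  show "ev3 c4 px g0 g1 g2 - kk * Xv = S1 * qq1"
    unfolding px_def ev3_simps[OF rhom_c4] unfolding g0_def g1_def g2_def kk_def qq1_def S1_def by algebra
qed

lemma dvd_py: "S1 dvd (ev3 c4 py g0 g1 g2 - kk * Yv)"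
proof
  show "ev3 c4 py g0 g1 g2 - kk * Yv = S1 * qq2"
    unfolding py_def ev3_simps[OF rhom_c4] unfolding g0_def g1_def g2_def kk_def qq2_def S1_def by algebra
qed

lemma dvd_pz: "S1 dvd (ev3 c4 pz g0 g1 g2 - kk * Zv)"
proof
  show "ev3 c4 pz g0 g1 g2 - kk * Zv = S1 * qq3"
    unfolding pz_def ev3_simps[OF rhom_c4] unfolding g0_def g1_def g2_def kk_def qq3_def S1_def by algebra
qed

lemma S1_dvd_ev: "S1 dvd p \<Longrightarrow> ev4 (\<lambda>x. x) p 1 0 0 1 = (0::rat)"
proof -
  assume "S1 dvd p"
  then obtain m where "p = S1 * m" by (auto simp: dvd_def)
  then have "ev4 (\<lambda>x. x) p 1 0 0 1 = ev4 (\<lambda>x. x) S1 1 0 0 1 * ev4 (\<lambda>x. x) m 1 0 0 1"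
    by (simp add: ev4_mult[OF rhom_id])
  moreover have "ev4 (\<lambda>x. x) S1 1 0 0 (1::rat) = 0"
    unfolding S1_def ev4_simps[OF rhom_id] by simp
  ultimately show ?thesis by simp
qed

lemma not_dvd_kk: "\<not> S1 dvd kk"
proof
  assume "S1 dvd kk"
  then have "ev4 (\<lambda>x. x) kk 1 0 0 1 = (0::rat)" by (rule S1_dvd_ev)
  moreover have "ev4 (\<lambda>x. x) kk 1 0 0 1 = (- 27::rat)"
    unfolding kk_def ev4_simps[OF rhom_id] by simp
  ultimately show False by simp
qed

lemma not_dvd_g0: "\<not> S1 dvd g0"
proof
  assume "S1 dvd g0"
  then have "ev4 (\<lambda>x. x) g0 1 0 0 1 = (0::rat)" by (rule S1_dvd_ev)
  moreover have "ev4 (\<lambda>x. x) g0 1 0 0 1 = (3::rat)"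
    unfolding g0_def ev4_simps[OF rhom_id] by simp
  ultimately show False by simp
qed

lemma hh_nz: "hh \<noteq> 0"
proof
  assume "hh = 0"
  then have "ev3 (\<lambda>x. x) hh 1 0 0 = (0::rat)" using rhom_0[OF rhom_ev3[OF rhom_id]] by simp
  moreover have "ev3 (\<lambda>x. x) hh 1 0 0 = (6::rat)"
    unfolding hh_def ev3_simps[OF rhom_id] by simp
  ultimately show False by simp
qed

lemma pw_nz: "pw \<noteq> 0"
proof
  assume "pw = 0"
  then have "ev3 (\<lambda>x. x) pw 1 0 0 = (0::rat)" using rhom_0[OF rhom_ev3[OF rhom_id]] by simp
  moreover have "ev3 (\<lambda>x. x) pw 1 0 0 = (- 1::rat)"
    unfolding pw_def ev3_simps[OF rhom_id] by simp
  ultimately show False by simp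
qed

lemma factorization: "pw^3 + px^3 = (- S) * fq1 * fq2 * ff"
  unfolding pw_def px_def fq1_def fq2_def ff_def by algebra

theorem mainTheorem19:
  shows "birational_onto_hypersurface pw px py pz S1 \<and>
         (\<exists>l q1 q2 f :: qpoly3.
            pw^3 + px^3 = l * q1 * q2 * f \<and>
            irreducible l \<and> irreducible q1 \<and> irreducible q2 \<and> irreducible f \<and>
            homog3 l 1 \<and> homog3 q1 2 \<and> homog3 q2 2 \<and> homog3 f 4)"
proof
  show "birational_onto_hypersurface pw px py pz S1"
    unfolding birational_onto_hypersurface_def
  proof (intro conjI)
    show "\<exists>d. homog3 pw d \<and> homog3 px d \<and> homog3 py d \<and> homog3 pz d"
      using homog_pw homog_px homog_py homog_pz by blast
    show "pw \<noteq> 0 \<or> px \<noteq> 0 \<or> py \<noteq> 0 \<or> pz \<noteq> 0" using pw_nz by blast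
    show "ev4 c3 S1 pw px py pz = 0" by (rule ev_S1)
    show "\<exists>G0 G1 G2 :: qpoly4.
        (\<exists>e. homog4 G0 e \<and> homog4 G1 e \<and> homog4 G2 e) \<and>
        \<not> (S1 dvd G0 \<and> S1 dvd G1 \<and> S1 dvd G2) \<and>
        (\<exists>h::qpoly3. h \<noteq> 0 \<and>
            ev4 c3 G0 pw px py pz = h * R \<and>
            ev4 c3 G1 pw px py pz = h * S \<and>
            ev4 c3 G2 pw px py pz = h * T) \<and>
        (\<exists>k::qpoly4. \<not> S1 dvd k \<and>
            S1 dvd (ev3 c4 pw G0 G1 G2 - k * Wv) \<and>
            S1 dvd (ev3 c4 px G0 G1 G2 - k * Xv) \<and>
            S1 dvd (ev3 c4 py G0 G1 G2 - k * Yv) \<and>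
            S1 dvd (ev3 c4 pz G0 G1 G2 - k * Zv))"
    proof (intro exI conjI)
      show "homog4 g0 2" "homog4 g1 2" "homog4 g2 2" by (rule homog_g0 homog_g1 homog_g2)+
      show "\<not> (S1 dvd g0 \<and> S1 dvd g1 \<and> S1 dvd g2)" using not_dvd_g0 by blast
      show "hh \<noteq> 0" by (rule hh_nz)
      show "ev4 c3 g0 pw px py pz = hh * R" by (rule ev_g0)
      show "ev4 c3 g1 pw px py pz = hh * S" by (rule ev_g1)
      show "ev4 c3 g2 pw px py pz = hh * T" by (rule ev_g2)
      show "\<not> S1 dvd kk" by (rule not_dvd_kk)
      show "S1 dvd (ev3 c4 pw g0 g1 g2 - kk * Wv)" by (rule dvd_pw)
      show "S1 dvd (ev3 c4 px g0 g1 g2 - kk * Xv)" by (rule dvd_px)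
      show "S1 dvd (ev3 c4 py g0 g1 g2 - kk * Yv)" by (rule dvd_py)
      show "S1 dvd (ev3 c4 pz g0 g1 g2 - kk * Zv)" by (rule dvd_pz)
    qed
  qed
next
  show "\<exists>l q1 q2 f :: qpoly3.
            pw^3 + px^3 = l * q1 * q2 * f \<and>
            irreducible l \<and> irreducible q1 \<and> irreducible q2 \<and> irreducible f \<and>
            homog3 l 1 \<and> homog3 q1 2 \<and> homog3 q2 2 \<and> homog3 f 4"
    using factorization irr_l irr_fq1 irr_fq2 irr_ff homog_l homog_fq1 homog_fq2 homog_ff by blast
qed

end
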